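(* Let $N$ be a positive integer. Then there exist equal norm tight integer frames with: (1) $4N^2$ vectors in $\mathcal{H}_{N^2+1}$; (2) $4N^2$ vectors in $\mathcal{H}_{2N^2+1}$; (3) $4N^2$ vectors in $\mathcal{H}_{3N^2+1}$; (4) $8N^2$ vectors in $\mathcal{H}_{4N^2+1}$; (5) $8N^2$ vectors in $\mathcal{H}_{4N^2+2}$.
   Context: $\mathcal{H}_M$ is the real $M$-dimensional Hilbert space, identified with $\mathbb{R}^M$ via a fixed orthonormal basis. An equal norm tight integer frame (ENTIF) with $N$ elements in $\mathcal{H}_M$ is an $M\times N$ integer matrix $A$ of rank $M$ with $AA^T=\lambda I_M$ for some $\lambda>0$ and all columns of the same Euclidean norm. *)

theory Defs
  imports Complex_Main
begin

text \<open>An M x N integer matrix is represented as a function A :: nat => nat => int,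
  of which only the entries A i j with i < M and j < N are relevant.
  Column j is the vector (A i j) for i < M; it is the j-th frame vector in R^M.\<close>

definition full_row_rank :: "nat \<Rightarrow> nat \<Rightarrow> (nat \<Rightarrow> nat \<Rightarrow> int) \<Rightarrow> bool" where
  "full_row_rank M N A \<longleftrightarrow>
     (\<forall>c :: nat \<Rightarrow> real. (\<forall>j<N. (\<Sum>i<M. c i * of_int (A i j)) = 0) \<longrightarrow> (\<forall>i<M. c i = 0))"

definition ENTIF :: "nat \<Rightarrow> nat \<Rightarrow> (nat \<Rightarrow> nat \<Rightarrow> int) \<Rightarrow> bool" where
  "ENTIF M N A \<longleftrightarrow>
     full_row_rank M N A \<and>
     (\<exists>lam::real. lam > 0 \<and>
        (\<forall>i<M. \<forall>k<M. (\<Sum>j<N. of_int (A i j * A k j)) = (if i = k then lam else 0))) \<and>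
     (\<forall>j<N. \<forall>j'<N. (\<Sum>i<M. (A i j)^2) = (\<Sum>i<M. (A i j')^2))"

definition has_ENTIF :: "nat \<Rightarrow> nat \<Rightarrow> bool" where
  "has_ENTIF N M \<longleftrightarrow> (\<exists>A. ENTIF M N A)"

end

theory Submission
  imports Defs
begin

lemma sum_groups:
  fixes f :: "nat \<Rightarrow> 'a::comm_monoid_add"
  shows "(\<Sum>j<q*m. f j) = (\<Sum>g<m. \<Sum>r<q. f (g*q + r))"
proof (induction m)
  case 0 then show ?case by simp
next
  case (Suc m)
  have "(\<Sum>j<q*Suc m. f j) = (\<Sum>j<q*m. f j) + (\<Sum>j=q*m..<q*m+q. f j)"
    by (simp add: lessThan_atLeast0 sum.atLeastLessThan_concat[symmetric] algebra_simps)
  also have "(\<Sum>j=q*m..<q*m+q. f j) = (\<Sum>r<q. f (m*q + r))"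
  proof -
    have "(\<Sum>j=0+m*q..<q+m*q. f j) = (\<Sum>r=0..<q. f (r + m*q))"
      by (rule sum.shift_bounds_nat_ivl)
    then show ?thesis by (simp add: lessThan_atLeast0 algebra_simps)
  qed
  finally show ?case using Suc by simp
qed

lemma sum_split_add:
  fixes f :: "nat \<Rightarrow> 'a::comm_monoid_add"
  shows "(\<Sum>i<t+x. f i) = (\<Sum>i<t. f i) + (\<Sum>i<x. f (t+i))"
proof -
  have "(\<Sum>i<t+x. f i) = (\<Sum>i<t. f i) + (\<Sum>i=t..<t+x. f i)"
    by (simp add: lessThan_atLeast0 sum.atLeastLessThan_concat[symmetric])
  also have "(\<Sum>i=t..<t+x. f i) = (\<Sum>i<x. f (t+i))"
  proof -
    have "(\<Sum>j=0+t..<x+t. f j) = (\<Sum>r=0..<x. f (r + t))"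
      by (rule sum.shift_bounds_nat_ivl)
    then show ?thesis by (simp add: lessThan_atLeast0 algebra_simps)
  qed
  finally show ?thesis .
qed

lemma orth_rank:
  fixes A :: "nat \<Rightarrow> nat \<Rightarrow> int" and lam :: real
  assumes lam: "lam > 0"
    and orth: "\<forall>i<M. \<forall>k<M. (\<Sum>j<N. of_int (A i j * A k j)) = (if i = k then lam else 0)"
  shows "full_row_rank M N A"
  unfolding full_row_rank_def
proof (intro allI impI)
  fix c :: "nat \<Rightarrow> real" and k
  assume z: "\<forall>j<N. (\<Sum>i<M. c i * of_int (A i j)) = 0" and k: "k < M"
  have "0 = (\<Sum>j<N. (\<Sum>i<M. c i * of_int (A i j)) * of_int (A k j))"
    using z by simp
  also have "\<dots> = (\<Sum>i<M. c i * (\<Sum>j<N. of_int (A i j * A k j)))"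
    by (simp add: sum_distrib_left sum_distrib_right sum.swap[of _ "{..<N}"] mult.assoc)
  also have "\<dots> = (\<Sum>i<M. c i * (if i = k then lam else 0))"
    using orth k by (intro sum.cong) auto
  also have "\<dots> = c k * lam" using k by (simp add: if_distrib cong: if_cong)
  finally show "c k = 0" using lam by simp
qed

definition blockM :: "nat \<Rightarrow> nat \<Rightarrow> nat \<Rightarrow> (nat \<Rightarrow> nat \<Rightarrow> int) \<Rightarrow> (nat \<Rightarrow> nat \<Rightarrow> int) \<Rightarrow> nat \<Rightarrow> nat \<Rightarrow> int" where
  "blockM t h q T H i j = (if i < t then T i (j mod q)
     else if (i - t) div h = j div q then H ((i - t) mod h) (j mod q) else 0)"

lemma block_ENTIF:
  fixes T H :: "nat \<Rightarrow> nat \<Rightarrow> int" and t h q m :: nat and lam :: int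
  assumes hq: "h > 0" "q > 0" and lam: "lam > 0"
    and TT: "\<forall>i<t. \<forall>k<t. int m * (\<Sum>r<q. T i r * T k r) = (if i = k then lam else 0)"
    and TH: "\<forall>i<t. \<forall>k<h. (\<Sum>r<q. T i r * H k r) = 0"
    and HH: "\<forall>i<h. \<forall>k<h. (\<Sum>r<q. H i r * H k r) = (if i = k then lam else 0)"
    and CN: "\<forall>r<q. \<forall>r'<q. (\<Sum>i<t. (T i r)^2) + (\<Sum>i<h. (H i r)^2) = (\<Sum>i<t. (T i r')^2) + (\<Sum>i<h. (H i r')^2)"
  shows "has_ENTIF (q*m) (t + h*m)"
proof -
  define A where "A = blockM t h q T H"
  have divmod: "(g*q + r) div q = g" "(g*q + r) mod q = r" if "r < q" for g r
    using that hq by auto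
  have orthI: "(\<Sum>j<q*m. A i j * A k j) = (if i = k then lam else 0)"
    if i: "i < t + h*m" and k: "k < t + h*m" for i k
  proof -
    have "(\<Sum>j<q*m. A i j * A k j) = (\<Sum>g<m. \<Sum>r<q. A i (g*q+r) * A k (g*q+r))"
      by (rule sum_groups)
    also have "\<dots> = (if i = k then lam else 0)"
    proof (cases "i < t")
      case it: True
      show ?thesis
      proof (cases "k < t")
        case kt: True
        have "(\<Sum>g<m. \<Sum>r<q. A i (g*q+r) * A k (g*q+r)) = (\<Sum>g<m. \<Sum>r<q. T i r * T k r)"
          using it kt by (intro sum.cong refl) (simp add: A_def blockM_def divmod)
        also have "\<dots> = int m * (\<Sum>r<q. T i r * T k r)" by simp
        finally show ?thesis using TT it kt by simp
      next
        case kt: False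
        define g0 where "g0 = (k - t) div h"
        define r0 where "r0 = (k - t) mod h"
        have g0: "g0 < m" using k kt hq unfolding g0_def
          by (simp add: less_mult_imp_div_less mult.commute)
        have r0: "r0 < h" using hq by (simp add: r0_def)
        have "(\<Sum>g<m. \<Sum>r<q. A i (g*q+r) * A k (g*q+r))
            = (\<Sum>g<m. if g = g0 then (\<Sum>r<q. T i r * H r0 r) else 0)"
          using it kt by (intro sum.cong refl) (auto simp add: A_def blockM_def divmod g0_def r0_def)
        also have "\<dots> = (\<Sum>r<q. T i r * H r0 r)" using g0 by simp
        also have "\<dots> = 0" using TH it r0 by simp
        finally show ?thesis using it kt by auto
      qed
    next
      case it: False
      define gi where "gi = (i - t) div h"
      define ri where "ri = (i - t) mod h"
      have gi: "gi < m" using i it hq unfolding gi_def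
        by (simp add: less_mult_imp_div_less mult.commute)
      have ri: "ri < h" using hq by (simp add: ri_def)
      show ?thesis
      proof (cases "k < t")
        case kt: True
        have "(\<Sum>g<m. \<Sum>r<q. A i (g*q+r) * A k (g*q+r))
            = (\<Sum>g<m. if g = gi then (\<Sum>r<q. T k r * H ri r) else 0)"
          using it kt by (intro sum.cong refl) (auto simp add: A_def blockM_def divmod gi_def ri_def mult.commute)
        also have "\<dots> = (\<Sum>r<q. T k r * H ri r)" using gi by simp
        also have "\<dots> = 0" using TH kt ri by simp
        finally show ?thesis using it kt by auto
      next
        case kt: False
        define gk where "gk = (k - t) div h"
        define rk where "rk = (k - t) mod h"
        have rk: "rk < h" using hq by (simp add: rk_def)
        have "(\<Sum>g<m. \<Sum>r<q. A i (g*q+r) * A k (g*q+r))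
            = (\<Sum>g<m. if g = gi \<and> g = gk then (\<Sum>r<q. H ri r * H rk r) else 0)"
          using it kt by (intro sum.cong refl) (auto simp add: A_def blockM_def divmod gi_def ri_def gk_def rk_def intro!: sum.neutral)
        also have "\<dots> = (if gi = gk then (\<Sum>r<q. H ri r * H rk r) else 0)"
          using gi by (cases "gi = gk") (auto intro!: sum.neutral)
        also have "\<dots> = (if i = k then lam else 0)"
        proof -
          have "i = k \<longleftrightarrow> i - t = k - t" using it kt by auto
          also have "\<dots> \<longleftrightarrow> gi = gk \<and> ri = rk" unfolding gi_def ri_def gk_def rk_def
            by (metis div_mult_mod_eq)
          finally have "i = k \<longleftrightarrow> gi = gk \<and> ri = rk" .
          then show ?thesis using HH ri rk by auto
        qed
        finally show ?thesis .
      qed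
    qed
    finally show ?thesis .
  qed
  have orthR: "\<forall>i<t+h*m. \<forall>k<t+h*m. (\<Sum>j<q*m. real_of_int (A i j * A k j)) = (if i = k then real_of_int lam else 0)"
  proof (intro allI impI)
    fix i k assume "i < t+h*m" "k < t+h*m"
    then have "real_of_int (\<Sum>j<q*m. A i j * A k j) = real_of_int (if i = k then lam else 0)"
      using orthI by simp
    then show "(\<Sum>j<q*m. real_of_int (A i j * A k j)) = (if i = k then real_of_int lam else 0)"
      by (simp add: of_int_sum)
  qed
  have colnorm: "(\<Sum>i<t+h*m. (A i j)^2) = (\<Sum>i<t. (T i (j mod q))^2) + (\<Sum>i<h. (H i (j mod q))^2)"
    if j: "j < q*m" for j
  proof -
    have jm: "j div q < m" using j hq by (simp add: less_mult_imp_div_less mult.commute)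
    have "(\<Sum>i<t+h*m. (A i j)^2) = (\<Sum>i<t. (A i j)^2) + (\<Sum>i<h*m. (A (t+i) j)^2)"
      by (rule sum_split_add)
    also have "(\<Sum>i<t. (A i j)^2) = (\<Sum>i<t. (T i (j mod q))^2)"
      by (intro sum.cong refl) (simp add: A_def blockM_def)
    also have "(\<Sum>i<h*m. (A (t+i) j)^2) = (\<Sum>g<m. \<Sum>r<h. (A (t+(g*h+r)) j)^2)"
      by (rule sum_groups)
    also have "\<dots> = (\<Sum>g<m. if g = j div q then (\<Sum>r<h. (H r (j mod q))^2) else 0)"
    proof (intro sum.cong refl)
      fix g assume "g \<in> {..<m}"
      have e: "A (t+(g*h+r)) j = (if g = j div q then H r (j mod q) else 0)" if "r < h" for r
      proof -
        have "(g*h+r) div h = g" "(g*h+r) mod h = r" using that hq by auto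
        then show ?thesis by (simp add: A_def blockM_def)
      qed
      show "(\<Sum>r<h. (A (t+(g*h+r)) j)^2) = (if g = j div q then (\<Sum>r<h. (H r (j mod q))^2) else 0)"
      proof (cases "g = j div q")
        case True
        have "(\<Sum>r<h. (A (t + (g * h + r)) j)\<^sup>2) = (\<Sum>r<h. (H r (j mod q))\<^sup>2)"
          by (intro sum.cong[OF refl]) (simp add: e, simp add: True)
        then show ?thesis using True by simp
      next
        case False then show ?thesis by (simp add: e)
      qed
    qed
    also have "\<dots> = (\<Sum>r<h. (H r (j mod q))^2)" using jm by simp
    finally show ?thesis .
  qed
  have "ENTIF (t + h*m) (q*m) A"
    unfolding ENTIF_def
  proof (intro conjI)
    show "full_row_rank (t + h * m) (q * m) A"
      by (rule orth_rank[OF _ orthR]) (use lam in simp)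
    show "\<exists>lam>0. \<forall>i<t + h * m. \<forall>k<t + h * m. (\<Sum>j<q * m. real_of_int (A i j * A k j)) = (if i = k then lam else 0)"
      using orthR lam by (intro exI[of _ "real_of_int lam"]) simp
    show "\<forall>j<q * m. \<forall>j'<q * m. (\<Sum>i<t + h * m. (A i j)\<^sup>2) = (\<Sum>i<t + h * m. (A i j')\<^sup>2)"
    proof (intro allI impI)
      fix j j' assume jj: "j < q*m" "j' < q*m"
      have "j mod q < q" "j' mod q < q" using hq by auto
      then show "(\<Sum>i<t + h * m. (A i j)\<^sup>2) = (\<Sum>i<t + h * m. (A i j')\<^sup>2)"
        unfolding colnorm[OF jj(1)] colnorm[OF jj(2)] using CN by blast
    qed
  qed
  then show ?thesis unfolding has_ENTIF_def by blast
qed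

lemma case1: assumes "N > 0" shows "has_ENTIF (4 * N^2) (N^2 + 1)"
proof -
  have "has_ENTIF (4*N^2) (1 + 1*N^2)"
    by (rule block_ENTIF[where T="\<lambda>i r. 1" and H="\<lambda>i r. int N * [1,1,-1,-1]!r" and lam="4 * int N^2"])
       (use assms in \<open>simp_all add: eval_nat_numeral lessThan_Suc All_less_Suc power2_eq_square algebra_simps\<close>)
  then show ?thesis by (simp add: add.commute)
qed

lemma case2: assumes "N > 0" shows "has_ENTIF (4 * N^2) (2 * N^2 + 1)"
proof -
  have "has_ENTIF (4*N^2) (1 + 2*N^2)"
    by (rule block_ENTIF[where T="\<lambda>i r. 1" and H="\<lambda>i r. int N * [[1,1,-1,-1],[1,-1,1,-1]]!i!r" and lam="4 * int N^2"])
       (use assms in \<open>simp_all add: eval_nat_numeral lessThan_Suc All_less_Suc power2_eq_square algebra_simps\<close>)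
  then show ?thesis by (simp add: add.commute)
qed

lemma case3: assumes "N > 0" shows "has_ENTIF (4 * N^2) (3 * N^2 + 1)"
proof -
  have "has_ENTIF (4*N^2) (1 + 3*N^2)"
    by (rule block_ENTIF[where T="\<lambda>i r. 1" and H="\<lambda>i r. int N * [[1,1,-1,-1],[1,-1,1,-1],[1,-1,-1,1]]!i!r" and lam="4 * int N^2"])
       (use assms in \<open>simp_all add: eval_nat_numeral lessThan_Suc All_less_Suc power2_eq_square algebra_simps\<close>)
  then show ?thesis by (simp add: add.commute)
qed

lemma case4: assumes "N > 0" shows "has_ENTIF (8 * N^2) (4 * N^2 + 1)"
proof -
  have "has_ENTIF (2*(4*N^2)) (1 + 1*(4*N^2))"
    by (rule block_ENTIF[where T="\<lambda>i r. 1" and H="\<lambda>i r. 2 * int N * [1,-1]!r" and lam="8 * int N^2"])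
       (use assms in \<open>simp_all add: eval_nat_numeral lessThan_Suc All_less_Suc power2_eq_square algebra_simps\<close>)
  then show ?thesis by (simp add: add.commute)
qed

lemma case5: assumes "N > 0" shows "has_ENTIF (8 * N^2) (4 * N^2 + 2)"
proof -
  have "has_ENTIF (4*(2*N^2)) (2 + 2*(2*N^2))"
    by (rule block_ENTIF[where T="\<lambda>i r. [[1,1,1,1],[1,1,-1,-1]]!i!r" and H="\<lambda>i r. 2 * int N * [[1,-1,0,0],[0,0,1,-1]]!i!r" and lam="8 * int N^2"])
       (use assms in \<open>simp_all add: eval_nat_numeral lessThan_Suc All_less_Suc power2_eq_square algebra_simps\<close>)
  then show ?thesis by (simp add: add.commute)
qed

theorem theorem6p10:
  fixes N :: nat
  assumes "N > 0"
  shows "has_ENTIF (4 * N^2) (N^2 + 1) \<and>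
         has_ENTIF (4 * N^2) (2 * N^2 + 1) \<and>
         has_ENTIF (4 * N^2) (3 * N^2 + 1) \<and>
         has_ENTIF (8 * N^2) (4 * N^2 + 1) \<and>
         has_ENTIF (8 * N^2) (4 * N^2 + 2)"
  using case1[OF assms] case2[OF assms] case3[OF assms] case4[OF assms] case5[OF assms] by blast

end
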